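(* Let $(\mathcal A,\mathcal T,(-))$ be a meta-tangible $\mathcal T$-triple and let $a_1\neq a_2$ be elements of $\mathcal T$ with $a_1+a_2=a_2$. Then $a_1(-)a_2=(-)a_2$, equivalently $a_2(-)a_1=a_2$.
   Context: $(\mathcal A,+,\mathbb 0)$ commutative monoid, $\mathcal T\subseteq\mathcal A\setminus\{\mathbb 0\}$. A negation map is $(-):\mathcal A\to\mathcal A$ with $(-)(b_1+b_2)=(-)b_1+(-)b_2$, $(-)((-)b)=b$, $(-)\mathbb 0=\mathbb 0$, $(-)\mathcal T\subseteq\mathcal T$. Write $b(-)c:=b+((-)c)$, $b^\circ:=b(-)b$, $\mathcal A^\circ=\{b^\circ:b\in\mathcal A\}$. A $\mathcal T$-triple $(\mathcal A,\mathcal T,(-))$: such data with an action $\mathcal T\times\mathcal A\to\mathcal A$ satisfying $a(b_1+b_2)=ab_1+ab_2$, $a\mathbb 0=\mathbb 0$, $(-)(ab)=((-)a)b=a((-)b)$, with $\mathcal T\cap\mathcal A^\circ=\emptyset$ and every element of $\mathcal A$ a finite sum of elements of $\mathcal T$. The triple is meta-tangible if $a+b\in\mathcal T$ for all $a,b\in\mathcal T$ with $b\neq(-)a$. *)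

theory Defs
  imports Main
begin

text \<open>The ambient commutative monoid (A,+,0) is the type 'a (class comm_monoid_add).
  T is a subset, neg is the negation map, act is the action T x A -> A
  (only its values act a b with a in T are constrained).\<close>

definition neg_map :: "'a::comm_monoid_add set \<Rightarrow> ('a \<Rightarrow> 'a) \<Rightarrow> bool" where
  "neg_map T neg \<longleftrightarrow>
     (\<forall>b1 b2. neg (b1 + b2) = neg b1 + neg b2) \<and>
     (\<forall>b. neg (neg b) = b) \<and>
     neg 0 = 0 \<and>
     neg ` T \<subseteq> T"

definition circ_set :: "('a::comm_monoid_add \<Rightarrow> 'a) \<Rightarrow> 'a set" where
  "circ_set neg = {b + neg b | b. True}"

definition T_triple ::
  "'a::comm_monoid_add set \<Rightarrow> ('a \<Rightarrow> 'a) \<Rightarrow> ('a \<Rightarrow> 'a \<Rightarrow> 'a) \<Rightarrow> bool" where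
  "T_triple T neg act \<longleftrightarrow>
     T \<subseteq> UNIV - {0} \<and>
     neg_map T neg \<and>
     (\<forall>a\<in>T. \<forall>b1 b2. act a (b1 + b2) = act a b1 + act a b2) \<and>
     (\<forall>a\<in>T. act a 0 = 0) \<and>
     (\<forall>a\<in>T. \<forall>b. neg (act a b) = act (neg a) b \<and> act (neg a) b = act a (neg b)) \<and>
     T \<inter> circ_set neg = {} \<and>
     (\<forall>x. \<exists>xs. set xs \<subseteq> T \<and> x = sum_list xs)"

definition meta_tangible ::
  "'a::comm_monoid_add set \<Rightarrow> ('a \<Rightarrow> 'a) \<Rightarrow> ('a \<Rightarrow> 'a \<Rightarrow> 'a) \<Rightarrow> bool" where
  "meta_tangible T neg act \<longleftrightarrow>
     T_triple T neg act \<and> (\<forall>a\<in>T. \<forall>b\<in>T. b \<noteq> neg a \<longrightarrow> a + b \<in> T)"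

end

theory Submission
  imports Defs
begin

theorem lemma7p11:
  fixes T :: "'a::comm_monoid_add set" and neg :: "'a \<Rightarrow> 'a" and act :: "'a \<Rightarrow> 'a \<Rightarrow> 'a"
    and a1 a2 :: 'a
  assumes "meta_tangible T neg act"
    and "a1 \<in> T" and "a2 \<in> T" and "a1 \<noteq> a2"
    and "a1 + a2 = a2"
  shows "a1 + neg a2 = neg a2 \<and> a2 + neg a1 = a2"
proof -
  have tt: "T_triple T neg act" and mt: "\<forall>a\<in>T. \<forall>b\<in>T. b \<noteq> neg a \<longrightarrow> a + b \<in> T"
    using assms(1) unfolding meta_tangible_def by auto
  have nm: "neg_map T neg" and disj: "T \<inter> circ_set neg = {}"
    using tt unfolding T_triple_def by auto
  have add: "\<And>x y. neg (x + y) = neg x + neg y" and inv: "\<And>b. neg (neg b) = b"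
    and nT: "neg ` T \<subseteq> T"
    using nm unfolding neg_map_def by auto
  have na2: "neg a2 \<in> T" using nT assms(3) by auto
  have "neg a2 \<noteq> neg a1"
  proof
    assume "neg a2 = neg a1"
    then have "neg (neg a2) = neg (neg a1)" by simp
    then show False using inv assms(4) by simp
  qed
  then have cT: "a1 + neg a2 \<in> T" using mt assms(2) na2 by blast
  define c where "c = a1 + neg a2"
  have "c + a2 = a2 + neg a2" unfolding c_def using assms(5)
    by (metis add.assoc add.commute)
  moreover have "a2 + neg a2 \<in> circ_set neg" unfolding circ_set_def by blast
  ultimately have "c + a2 \<notin> T" using disj by auto
  then have "a2 = neg c" using mt cT assms(3) unfolding c_def by blast
  then have 1: "c = neg a2" using inv by simp
  have "a2 + neg a1 = neg (neg a2 + a1)" using add inv by (simp add: add.commute)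
  also have "\<dots> = a2" using 1 inv unfolding c_def by (simp add: add.commute)
  finally show ?thesis using 1 c_def by simp
qed

end
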